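(* Let $X$ be a special (abstract) rank one group with abelian unipotent subgroups $A$ and $B$, and set $H = N_X(A) \cap N_X(B)$. If $|A| \geq 4$, then $A = [A,H]$.
   Context: For a group $X$ and $g,x \in X$, write $x^g = g^{-1}xg$, $A^g = g^{-1}Ag$, and $[x,g] = x^{-1}g^{-1}xg$; $[A,H]$ denotes the subgroup generated by all $[a,h]$ with $a \in A$, $h \in H$. A group $X$ is an (abstract) rank one group with abelian unipotent subgroups $A$ and $B$ if $X = \langle A, B\rangle$ where $A$ and $B$ are different abelian subgroups of $X$ such that for each $1 \neq a \in A$ there is an element $1 \neq b \in B$ with $A^b = B^a$, and for each $1 \neq b \in B$ there is an element $1 \neq a \in A$ with $B^a = A^b$. In such a group, for each $1 \neq a \in A$ the element $1 \neq b \in B$ with $A^b = B^a$ is uniquely determined and is denoted $b(a)$. The group $X$ is called special if $b(a^{-1}) = b(a)^{-1}$ for all $1 \neq a \in A$. *)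

theory Defs
  imports "HOL-Algebra.Group_Action" "HOL-Algebra.Generated_Groups"
begin

text \<open>Conjugation conventions of the paper: x^g = g^-1 x g, A^g = g^-1 A g,
  [x,g] = x^-1 g^-1 x g.\<close>

definition conj_set :: "('a, 'b) monoid_scheme \<Rightarrow> 'a set \<Rightarrow> 'a \<Rightarrow> 'a set" where
  "conj_set G A g = (\<lambda>a. inv\<^bsub>G\<^esub> g \<otimes>\<^bsub>G\<^esub> a \<otimes>\<^bsub>G\<^esub> g) ` A"

definition comm_elem :: "('a, 'b) monoid_scheme \<Rightarrow> 'a \<Rightarrow> 'a \<Rightarrow> 'a" where
  "comm_elem G x g = inv\<^bsub>G\<^esub> x \<otimes>\<^bsub>G\<^esub> inv\<^bsub>G\<^esub> g \<otimes>\<^bsub>G\<^esub> x \<otimes>\<^bsub>G\<^esub> g"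

definition comm_subgroup :: "('a, 'b) monoid_scheme \<Rightarrow> 'a set \<Rightarrow> 'a set \<Rightarrow> 'a set" where
  "comm_subgroup G A H = generate G {comm_elem G a h | a h. a \<in> A \<and> h \<in> H}"

definition abelian_subgroup :: "('a, 'b) monoid_scheme \<Rightarrow> 'a set \<Rightarrow> bool" where
  "abelian_subgroup G A \<longleftrightarrow> subgroup A G \<and>
     (\<forall>x\<in>A. \<forall>y\<in>A. x \<otimes>\<^bsub>G\<^esub> y = y \<otimes>\<^bsub>G\<^esub> x)"

definition rank_one_group :: "('a, 'b) monoid_scheme \<Rightarrow> 'a set \<Rightarrow> 'a set \<Rightarrow> bool" where
  "rank_one_group G A B \<longleftrightarrow> group G \<and>
     abelian_subgroup G A \<and> abelian_subgroup G B \<and> A \<noteq> B \<and>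
     generate G (A \<union> B) = carrier G \<and>
     (\<forall>a\<in>A - {\<one>\<^bsub>G\<^esub>}. \<exists>b\<in>B - {\<one>\<^bsub>G\<^esub>}. conj_set G A b = conj_set G B a) \<and>
     (\<forall>b\<in>B - {\<one>\<^bsub>G\<^esub>}. \<exists>a\<in>A - {\<one>\<^bsub>G\<^esub>}. conj_set G B a = conj_set G A b)"

definition b_of :: "('a, 'b) monoid_scheme \<Rightarrow> 'a set \<Rightarrow> 'a set \<Rightarrow> 'a \<Rightarrow> 'a" where
  "b_of G A B a = (THE b. b \<in> B - {\<one>\<^bsub>G\<^esub>} \<and> conj_set G A b = conj_set G B a)"

definition special_rank_one_group :: "('a, 'b) monoid_scheme \<Rightarrow> 'a set \<Rightarrow> 'a set \<Rightarrow> bool" where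
  "special_rank_one_group G A B \<longleftrightarrow> rank_one_group G A B \<and>
     (\<forall>a\<in>A - {\<one>\<^bsub>G\<^esub>}. b_of G A B (inv\<^bsub>G\<^esub> a) = inv\<^bsub>G\<^esub> (b_of G A B a))"

end

theory Submission
  imports Defs
begin

context group
begin

lemma cs_carrier: "S \<subseteq> carrier G \<Longrightarrow> g \<in> carrier G \<Longrightarrow> conj_set G S g \<subseteq> carrier G"
  unfolding conj_set_def by auto

lemma cs_mem: "x \<in> S \<Longrightarrow> inv g \<otimes> x \<otimes> g \<in> conj_set G S g"
  unfolding conj_set_def by auto

lemma cs_comp: "S \<subseteq> carrier G \<Longrightarrow> g \<in> carrier G \<Longrightarrow> h \<in> carrier G \<Longrightarrow>
   conj_set G (conj_set G S g) h = conj_set G S (g \<otimes> h)"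
  unfolding conj_set_def image_image
  by (intro image_cong refl) (auto simp: inv_mult_group m_assoc subsetD)

lemma cs_one: "S \<subseteq> carrier G \<Longrightarrow> conj_set G S \<one> = S"
  unfolding conj_set_def by (auto simp: subsetD)

lemma cs_sub: assumes "subgroup S G" "a \<in> S" shows "conj_set G S a = S"
proof -
  interpret subgroup S G by fact
  have ac: "a \<in> carrier G" using assms(2) by auto
  show ?thesis
  proof
    show "conj_set G S a \<subseteq> S" unfolding conj_set_def using assms(2) by auto
    show "S \<subseteq> conj_set G S a"
    proof
      fix x assume x: "x \<in> S"
      hence "a \<otimes> x \<otimes> inv a \<in> S" using assms(2) by auto
      moreover have "x = inv a \<otimes> (a \<otimes> x \<otimes> inv a) \<otimes> a" using x ac
        by (simp add: m_assoc[symmetric] subsetD) (simp add: m_assoc subsetD)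
      ultimately show "x \<in> conj_set G S a" unfolding conj_set_def by blast
    qed
  qed
qed

lemma cs_inv: "S \<subseteq> carrier G \<Longrightarrow> g \<in> carrier G \<Longrightarrow> conj_set G S g = T \<Longrightarrow> conj_set G T (inv g) = S"
  using cs_comp[of S g "inv g"] cs_one by auto

lemma cs_eq_iff: "S \<subseteq> carrier G \<Longrightarrow> T \<subseteq> carrier G \<Longrightarrow> g \<in> carrier G \<Longrightarrow> conj_set G S g = T \<longleftrightarrow> conj_set G T (inv g) = S"
  using cs_inv[of S g T] cs_inv[of T "inv g" S] by auto

lemma normalizer_iff: "S \<subseteq> carrier G \<Longrightarrow> g \<in> normalizer G S \<longleftrightarrow> g \<in> carrier G \<and> conj_set G S g = S"
proof -
  assume S: "S \<subseteq> carrier G"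
  have "g \<in> carrier G \<Longrightarrow> g <# S #> inv g = conj_set G S (inv g)"
    unfolding l_coset_def r_coset_def conj_set_def image_image by auto
  moreover have "g \<in> carrier G \<Longrightarrow> conj_set G S (inv g) = S \<longleftrightarrow> conj_set G S g = S"
    using cs_eq_iff[OF S S, of "inv g"] by simp
  ultimately show ?thesis unfolding normalizer_def stabilizer_def using S by auto
qed

lemma lc1 [simp]: "x \<in> carrier G \<Longrightarrow> y \<in> carrier G \<Longrightarrow> x \<otimes> (inv x \<otimes> y) = y"
  by (simp add: m_assoc[symmetric])
lemma lc2 [simp]: "x \<in> carrier G \<Longrightarrow> y \<in> carrier G \<Longrightarrow> inv x \<otimes> (x \<otimes> y) = y"
  by (simp add: m_assoc[symmetric])

lemma alg1: assumes "N \<in> carrier G" "m \<in> carrier G" "x \<in> carrier G" "inv m \<otimes> x \<otimes> m = inv x \<otimes> m \<otimes> inv x"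
  shows "inv N \<otimes> x \<otimes> N = inv (inv (inv m \<otimes> N) \<otimes> x \<otimes> (inv m \<otimes> N)) \<otimes> (inv N \<otimes> m) \<otimes> N \<otimes> inv (inv (inv m \<otimes> N) \<otimes> x \<otimes> (inv m \<otimes> N))"
proof -
  have R': "inv x \<otimes> (m \<otimes> (inv x \<otimes> z)) = inv m \<otimes> (x \<otimes> (m \<otimes> z))" if z: "z \<in> carrier G" for z
  proof -
    have "(inv x \<otimes> m \<otimes> inv x) \<otimes> z = (inv m \<otimes> x \<otimes> m) \<otimes> z" using assms(4) by simp
    thus ?thesis using assms(1-3) z by (simp add: m_assoc)
  qed
  show ?thesis using assms by (simp add: inv_mult_group m_assoc R')
qed

end

locale sr1 = group G for G (structure) +
  fixes A B
  assumes A_sg: "subgroup A G" and B_sg: "subgroup B G"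
    and A_comm: "\<And>x y. x \<in> A \<Longrightarrow> y \<in> A \<Longrightarrow> x \<otimes> y = y \<otimes> x"
    and AB: "A \<noteq> B"
    and exA: "\<And>a. a \<in> A \<Longrightarrow> a \<noteq> \<one> \<Longrightarrow> \<exists>b\<in>B. b \<noteq> \<one> \<and> conj_set G A b = conj_set G B a"
    and exB: "\<And>b. b \<in> B \<Longrightarrow> b \<noteq> \<one> \<Longrightarrow> \<exists>a\<in>A. a \<noteq> \<one> \<and> conj_set G B a = conj_set G A b"
    and special: "\<And>a. a \<in> A \<Longrightarrow> a \<noteq> \<one> \<Longrightarrow> b_of G A B (inv a) = inv (b_of G A B a)"
begin

lemma Ac: "A \<subseteq> carrier G" using A_sg subgroup.subset by blast
lemma Bc: "B \<subseteq> carrier G" using B_sg subgroup.subset by blast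
lemma Acar [simp]: "x \<in> A \<Longrightarrow> x \<in> carrier G" using Ac by blast
lemma Bcar [simp]: "x \<in> B \<Longrightarrow> x \<in> carrier G" using Bc by blast
lemma A_m [simp]: "x \<in> A \<Longrightarrow> y \<in> A \<Longrightarrow> x \<otimes> y \<in> A" by (rule subgroup.m_closed[OF A_sg])
lemma B_m [simp]: "x \<in> B \<Longrightarrow> y \<in> B \<Longrightarrow> x \<otimes> y \<in> B" by (rule subgroup.m_closed[OF B_sg])
lemma A_i [simp]: "x \<in> A \<Longrightarrow> inv x \<in> A" by (rule subgroup.m_inv_closed[OF A_sg])
lemma B_i [simp]: "x \<in> B \<Longrightarrow> inv x \<in> B" by (rule subgroup.m_inv_closed[OF B_sg])
lemma A_1 [simp]: "\<one> \<in> A" by (rule subgroup.one_closed[OF A_sg])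
lemma B_1 [simp]: "\<one> \<in> B" by (rule subgroup.one_closed[OF B_sg])

lemma F1a: assumes "b \<in> B" "conj_set G A b = A" shows "b = \<one>"
proof (rule ccontr)
  assume "b \<noteq> \<one>"
  then obtain a where a: "a \<in> A" "a \<noteq> \<one>" "conj_set G B a = conj_set G A b" using exB assms(1) by blast
  hence "conj_set G B a = A" using assms by simp
  hence "conj_set G A (inv a) = B" using cs_inv[OF Bc] a by simp
  moreover have "conj_set G A (inv a) = A" using cs_sub[OF A_sg] a by simp
  ultimately show False using AB by simp
qed

lemma F1b: assumes "a \<in> A" "conj_set G B a = B" shows "a = \<one>"
proof (rule ccontr)
  assume "a \<noteq> \<one>"
  then obtain b where b: "b \<in> B" "b \<noteq> \<one>" "conj_set G A b = conj_set G B a" using exA assms(1) by blast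
  hence "conj_set G A b = B" using assms by simp
  hence "conj_set G B (inv b) = A" using cs_inv[OF Ac] b by simp
  moreover have "conj_set G B (inv b) = B" using cs_sub[OF B_sg] b by simp
  ultimately show False using AB by simp
qed

lemma b_uniq: assumes "b \<in> B" "b' \<in> B" "conj_set G A b = conj_set G B a" "conj_set G A b' = conj_set G B a"
  shows "b = b'"
proof -
  have "conj_set G A (b' \<otimes> inv b) = conj_set G (conj_set G A b') (inv b)"
    using cs_comp[OF Ac, of b' "inv b"] assms(1,2) by simp
  also have "\<dots> = A" using assms cs_inv[OF Ac, of b "conj_set G B a"] by simp
  finally have "b' \<otimes> inv b = \<one>" using F1a assms by simp
  hence "b' \<otimes> inv b \<otimes> b = b" using assms by simp
  thus ?thesis using assms by (simp add: m_assoc)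
qed

lemma bo: assumes "a \<in> A" "a \<noteq> \<one>"
  shows "b_of G A B a \<in> B" "b_of G A B a \<noteq> \<one>" "conj_set G A (b_of G A B a) = conj_set G B a"
proof -
  obtain b where b: "b \<in> B" "b \<noteq> \<one>" "conj_set G A b = conj_set G B a" using exA assms by blast
  have "\<exists>!b. b \<in> B - {\<one>} \<and> conj_set G A b = conj_set G B a"
    using b b_uniq by blast
  from theI'[OF this] show "b_of G A B a \<in> B" "b_of G A B a \<noteq> \<one>" "conj_set G A (b_of G A B a) = conj_set G B a"
    unfolding b_of_def by auto
qed

lemma bo_eq: assumes "a \<in> A" "a \<noteq> \<one>" "b \<in> B" "conj_set G A b = conj_set G B a"
  shows "b_of G A B a = b"
  using b_uniq[OF bo(1)[OF assms(1,2)] assms(3)] bo(3)[OF assms(1,2)] assms(4) by simp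

lemma cs_step: "S \<subseteq> carrier G \<Longrightarrow> g \<in> carrier G \<Longrightarrow> h \<in> carrier G \<Longrightarrow> conj_set G S g = T \<Longrightarrow> conj_set G S (g \<otimes> h) = conj_set G T h"
  using cs_comp by metis

lemma braid: assumes "a \<in> A" "a \<noteq> \<one>"
  shows "a \<otimes> inv (b_of G A B a) \<otimes> a = inv (b_of G A B a) \<otimes> a \<otimes> inv (b_of G A B a)"
proof -
  define b where "b = b_of G A B a"
  have b: "b \<in> B" "b \<noteq> \<one>" "conj_set G A b = conj_set G B a" using bo assms b_def by auto
  have bc: "b \<in> carrier G" using b by simp
  have ac: "a \<in> carrier G" using assms by simp
  have ia: "inv a \<in> A" "inv a \<noteq> \<one>" using assms by auto
  have bi: "b_of G A B (inv a) = inv b" using special assms b_def by simp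
  have cAib: "conj_set G A (inv b) = conj_set G B (inv a)" using bo(3)[OF ia] bi by simp
  have "inv b \<otimes> a \<otimes> b \<in> conj_set G B a" using cs_mem[of a A b] b(3) assms by simp
  then obtain y where y: "y \<in> B" "inv a \<otimes> y \<otimes> a = inv b \<otimes> a \<otimes> b" unfolding conj_set_def by auto
  define d where "d = a \<otimes> inv b \<otimes> a \<otimes> b \<otimes> inv a"
  have "d = a \<otimes> (inv b \<otimes> a \<otimes> b) \<otimes> inv a" using ac bc by (simp add: d_def m_assoc)
  also have "\<dots> = a \<otimes> (inv a \<otimes> y \<otimes> a) \<otimes> inv a" using y by simp
  also have "\<dots> = y" using ac y(1) by (simp add: m_assoc)
  finally have dy: "d = y" .
  have s1: "conj_set G A a = A" using cs_sub[OF A_sg assms(1)] .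
  have s2: "conj_set G A (a \<otimes> inv b) = conj_set G B (inv a)"
    using cs_step[OF Ac ac _ s1, of "inv b"] bc cAib by simp
  have s3: "conj_set G A (a \<otimes> inv b \<otimes> a) = B"
  proof -
    have "conj_set G A (a \<otimes> inv b \<otimes> a) = conj_set G (conj_set G B (inv a)) a"
      using cs_step[OF Ac _ ac s2] ac bc by simp
    also have "\<dots> = B" using cs_inv[OF Bc, of "inv a" "conj_set G B (inv a)"] ac by simp
    finally show ?thesis .
  qed
  have s4: "conj_set G A (a \<otimes> inv b \<otimes> a \<otimes> b) = B"
    using cs_step[OF Ac _ bc s3] ac bc cs_sub[OF B_sg b(1)] by simp
  have s5: "conj_set G A d = conj_set G B (inv a)"
    using cs_step[OF Ac _ _ s4, of "inv a"] ac bc d_def by simp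
  have "b_of G A B (inv a) = d" using bo_eq[OF ia, of d] s5 dy y(1) by simp
  hence dib: "d = inv b" using bi by simp
  have "a \<otimes> inv b \<otimes> a = d \<otimes> a \<otimes> inv b" using ac bc by (simp add: d_def m_assoc)
  thus ?thesis using dib b_def by simp
qed

definition nn where "nn a = a \<otimes> inv (b_of G A B a) \<otimes> a"

lemma nn_props: assumes "a \<in> A" "a \<noteq> \<one>"
  shows "nn a \<in> carrier G" "conj_set G A (nn a) = B" "conj_set G B (nn a) = A"
    "inv (nn a) \<otimes> a \<otimes> nn a = inv a \<otimes> nn a \<otimes> inv a"
proof -
  define b where "b = b_of G A B a"
  have b: "b \<in> B" "b \<noteq> \<one>" "conj_set G A b = conj_set G B a" using bo assms b_def by auto
  have bc: "b \<in> carrier G" using b by simp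
  have ac: "a \<in> carrier G" using assms by simp
  have ia: "inv a \<in> A" "inv a \<noteq> \<one>" using assms by auto
  have bi: "b_of G A B (inv a) = inv b" using special assms b_def by simp
  have cAib: "conj_set G A (inv b) = conj_set G B (inv a)" using bo(3)[OF ia] bi by simp
  have nd: "nn a = a \<otimes> inv b \<otimes> a" using nn_def b_def by simp
  show nc: "nn a \<in> carrier G" using nd ac bc by simp
  have s1: "conj_set G A a = A" using cs_sub[OF A_sg assms(1)] .
  have s2: "conj_set G A (a \<otimes> inv b) = conj_set G B (inv a)"
    using cs_step[OF Ac ac _ s1, of "inv b"] bc cAib by simp
  have "conj_set G A (a \<otimes> inv b \<otimes> a) = conj_set G (conj_set G B (inv a)) a"
    using cs_step[OF Ac _ ac s2] ac bc by simp
  also have "\<dots> = B" using cs_inv[OF Bc, of "inv a" "conj_set G B (inv a)"] ac by simp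
  finally show "conj_set G A (nn a) = B" using nd by simp
  have t1: "conj_set G B (a \<otimes> inv b) = A"
    using cs_step[OF Bc ac _ b(3)[symmetric], of "inv b"] bc cs_inv[OF Ac bc b(3)] b(3) by simp
  show "conj_set G B (nn a) = A"
    using cs_step[OF Bc _ ac t1] ac bc s1 nd by simp
  have br: "a \<otimes> inv b \<otimes> a = inv b \<otimes> a \<otimes> inv b" using braid[OF assms] b_def by simp
  have "nn a \<otimes> inv b = a \<otimes> (inv b \<otimes> a \<otimes> inv b)" using nd ac bc by (simp add: m_assoc)
  also have "\<dots> = a \<otimes> nn a" using br nd by simp
  finally have e1: "a \<otimes> nn a = nn a \<otimes> inv b" by simp
  have "inv (nn a) \<otimes> a \<otimes> nn a = inv (nn a) \<otimes> (a \<otimes> nn a)" using nc ac by (simp add: m_assoc)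
  also have "\<dots> = inv b" using e1 nc bc by simp
  also have "\<dots> = inv a \<otimes> nn a \<otimes> inv a" using nd ac bc by (simp add: m_assoc)
  finally show "inv (nn a) \<otimes> a \<otimes> nn a = inv a \<otimes> nn a \<otimes> inv a" .
qed

definition sw where "sw g \<longleftrightarrow> g \<in> carrier G \<and> conj_set G A g = B \<and> conj_set G B g = A"
definition HH where "HH = normalizer G A \<inter> normalizer G B"
definition KK where "KK = comm_subgroup G A HH"

lemma HH_iff: "h \<in> HH \<longleftrightarrow> h \<in> carrier G \<and> conj_set G A h = A \<and> conj_set G B h = B"
  unfolding HH_def using normalizer_iff[OF Ac] normalizer_iff[OF Bc] by auto

lemma sw_nn: "a \<in> A \<Longrightarrow> a \<noteq> \<one> \<Longrightarrow> sw (nn a)"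
  using nn_props unfolding sw_def by auto

lemma sw_inv: "sw g \<Longrightarrow> sw (inv g)"
  unfolding sw_def using cs_inv[OF Ac] cs_inv[OF Bc] by auto

lemma sw_sw: "sw g \<Longrightarrow> sw g' \<Longrightarrow> g \<otimes> g' \<in> HH"
  unfolding sw_def HH_iff using cs_step[OF Ac] cs_step[OF Bc] by auto

lemma sw_H1: "sw g \<Longrightarrow> h \<in> HH \<Longrightarrow> sw (g \<otimes> h)"
  unfolding sw_def HH_iff using cs_step[OF Ac] cs_step[OF Bc] by auto

lemma sw_H2: "sw g \<Longrightarrow> h \<in> HH \<Longrightarrow> sw (h \<otimes> g)"
  unfolding sw_def HH_iff using cs_step[OF Ac] cs_step[OF Bc] by auto

lemma HH_m: "h \<in> HH \<Longrightarrow> h' \<in> HH \<Longrightarrow> h \<otimes> h' \<in> HH"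
  unfolding HH_iff using cs_step[OF Ac] cs_step[OF Bc] by auto

lemma HH_inv: "h \<in> HH \<Longrightarrow> inv h \<in> HH"
  unfolding HH_iff using cs_inv[OF Ac] cs_inv[OF Bc] by auto

lemma HH_car: "h \<in> HH \<Longrightarrow> h \<in> carrier G" unfolding HH_iff by auto
lemma sw_car: "sw h \<Longrightarrow> h \<in> carrier G" unfolding sw_def by auto

lemma HH_conj: "sw N \<Longrightarrow> h \<in> HH \<Longrightarrow> N \<otimes> h \<otimes> inv N \<in> HH"
  using sw_sw[OF sw_H1 sw_inv] by blast

lemma cjA: "x \<in> A \<Longrightarrow> h \<in> HH \<Longrightarrow> inv h \<otimes> x \<otimes> h \<in> A"
  using cs_mem[of x A h] unfolding HH_iff by auto

lemma cjB: "x \<in> A \<Longrightarrow> sw g \<Longrightarrow> inv g \<otimes> x \<otimes> g \<in> B"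
  using cs_mem[of x A g] unfolding sw_def by auto

lemma comm_set_A: "{comm_elem G a h | a h. a \<in> A \<and> h \<in> HH} \<subseteq> A"
proof
  fix z assume "z \<in> {comm_elem G a h | a h. a \<in> A \<and> h \<in> HH}"
  then obtain a h where z: "z = comm_elem G a h" "a \<in> A" "h \<in> HH" by blast
  have "z = inv a \<otimes> (inv h \<otimes> a \<otimes> h)" using z HH_car by (simp add: comm_elem_def m_assoc)
  thus "z \<in> A" using cjA z by simp
qed

lemma KK_sg: "subgroup KK G"
  unfolding KK_def comm_subgroup_def using generate_is_subgroup comm_set_A Ac by blast

lemma KK_A: "KK \<subseteq> A"
  unfolding KK_def comm_subgroup_def using generate_subgroup_incl[OF comm_set_A A_sg] .

lemma KK_mem: "x \<in> A \<Longrightarrow> h \<in> HH \<Longrightarrow> inv x \<otimes> (inv h \<otimes> x \<otimes> h) \<in> KK"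
proof -
  assume x: "x \<in> A" and h: "h \<in> HH"
  have "inv x \<otimes> (inv h \<otimes> x \<otimes> h) = comm_elem G x h" using x h HH_car by (simp add: comm_elem_def m_assoc)
  moreover have "comm_elem G x h \<in> generate G {comm_elem G a h | a h. a \<in> A \<and> h \<in> HH}"
    by (rule generate.incl) (use x h in blast)
  ultimately show ?thesis unfolding KK_def comm_subgroup_def by simp
qed

lemma KK_m: "x \<in> KK \<Longrightarrow> y \<in> KK \<Longrightarrow> x \<otimes> y \<in> KK" using subgroup.m_closed[OF KK_sg] by blast
lemma KK_i: "x \<in> KK \<Longrightarrow> inv x \<in> KK" using subgroup.m_inv_closed[OF KK_sg] by blast
lemma KK_1: "\<one> \<in> KK" using subgroup.one_closed[OF KK_sg] by blast

definition rel where "rel x y \<longleftrightarrow> x \<in> A \<and> y \<in> A \<and> inv x \<otimes> y \<in> KK"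

lemma rel_refl: "x \<in> A \<Longrightarrow> rel x x" unfolding rel_def using KK_1 by simp
lemma rel_sym: "rel x y \<Longrightarrow> rel y x"
proof -
  assume "rel x y"
  hence h: "x \<in> A" "y \<in> A" "inv (inv x \<otimes> y) \<in> KK" unfolding rel_def using KK_i by auto
  thus "rel y x" unfolding rel_def by (simp add: inv_mult_group)
qed
lemma rel_trans: "rel x y \<Longrightarrow> rel y z \<Longrightarrow> rel x z"
proof -
  assume "rel x y" "rel y z"
  hence "x \<in> A" "y \<in> A" "z \<in> A" "(inv x \<otimes> y) \<otimes> (inv y \<otimes> z) \<in> KK" unfolding rel_def using KK_m by auto
  thus "rel x z" unfolding rel_def by (simp add: m_assoc)
qed
lemma rel_mult: "rel x y \<Longrightarrow> rel x' y' \<Longrightarrow> rel (x \<otimes> x') (y \<otimes> y')"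
proof -
  assume "rel x y" "rel x' y'"
  hence h: "x \<in> A" "y \<in> A" "x' \<in> A" "y' \<in> A" "(inv x \<otimes> y) \<otimes> (inv x' \<otimes> y') \<in> KK" unfolding rel_def using KK_m by auto
  have "inv (x \<otimes> x') \<otimes> (y \<otimes> y') = inv x' \<otimes> ((inv x \<otimes> y) \<otimes> y')"
    using h by (simp add: inv_mult_group m_assoc)
  also have "\<dots> = (inv x \<otimes> y) \<otimes> (inv x' \<otimes> y')"
    using h A_comm[of "inv x'" "inv x \<otimes> y"] by (simp add: m_assoc[symmetric])
  finally show ?thesis using h unfolding rel_def by simp
qed
lemma rel_inv: "rel x y \<Longrightarrow> rel (inv x) (inv y)"
proof -
  assume "rel x y"
  hence h: "x \<in> A" "y \<in> A" "inv (inv x \<otimes> y) \<in> KK" unfolding rel_def using KK_i by auto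
  have "inv (inv x \<otimes> y) = inv (inv x) \<otimes> inv y"
    using h A_comm[of "inv y" x] by (simp add: inv_mult_group)
  thus ?thesis using h unfolding rel_def by simp
qed
lemma rel_conj: "x \<in> A \<Longrightarrow> h \<in> HH \<Longrightarrow> rel x (inv h \<otimes> x \<otimes> h)"
  unfolding rel_def using KK_mem cjA by auto

lemma Dlem: assumes "sw N" "x \<in> A" "x \<noteq> \<one>"
  obtains x' h where "rel x x'" "h \<in> HH" "inv N \<otimes> x \<otimes> N = inv x' \<otimes> h \<otimes> N \<otimes> inv x'"
proof -
  define m where "m = nn x"
  have sm: "sw m" using sw_nn assms m_def by simp
  have R: "inv m \<otimes> x \<otimes> m = inv x \<otimes> m \<otimes> inv x" using nn_props(4)[OF assms(2,3)] m_def by simp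
  have g: "inv m \<otimes> N \<in> HH" using sw_sw[OF sw_inv[OF sm] assms(1)] .
  have h: "inv N \<otimes> m \<in> HH" using sw_sw[OF sw_inv[OF assms(1)] sm] .
  have r: "rel x (inv (inv m \<otimes> N) \<otimes> x \<otimes> (inv m \<otimes> N))" using rel_conj[OF assms(2) g] .
  show ?thesis
    by (rule that[OF r h alg1[OF sw_car[OF assms(1)] sw_car[OF sm] Acar[OF assms(2)] R]])
qed

lemma main: assumes c: "c \<in> A" "c \<noteq> \<one>" and d: "d \<in> A" "d \<noteq> \<one>" and cd: "c \<otimes> d \<noteq> \<one>"
  shows "c \<otimes> d \<otimes> d \<in> KK \<and> c \<otimes> c \<otimes> d \<in> KK"
proof -
  have cdA: "c \<otimes> d \<in> A" using c d by simp
  have cc: "c \<in> carrier G" and dc: "d \<in> carrier G" using c d by auto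
  define N where "N = nn (c \<otimes> d)"
  have sN: "sw N" using sw_nn cdA cd N_def by simp
  have Nc: "N \<in> carrier G" using sw_car sN by simp
  have R: "inv N \<otimes> (c \<otimes> d) \<otimes> N = inv (c \<otimes> d) \<otimes> N \<otimes> inv (c \<otimes> d)"
    using nn_props(4)[OF cdA cd] N_def by simp
  obtain c' hc where Dc: "rel c c'" "hc \<in> HH" "inv N \<otimes> c \<otimes> N = inv c' \<otimes> hc \<otimes> N \<otimes> inv c'"
    using Dlem[OF sN c] by blast
  obtain d' hd where Dd: "rel d d'" "hd \<in> HH" "inv N \<otimes> d \<otimes> N = inv d' \<otimes> hd \<otimes> N \<otimes> inv d'"
    using Dlem[OF sN d] by blast
  have c'A: "c' \<in> A" and d'A: "d' \<in> A" using Dc(1) Dd(1) unfolding rel_def by auto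
  have c'c: "c' \<in> carrier G" and d'c: "d' \<in> carrier G" using c'A d'A by auto
  have hcc: "hc \<in> carrier G" and hdc: "hd \<in> carrier G" using Dc(2) Dd(2) HH_car by auto
  define e where "e = inv hd \<otimes> (inv c' \<otimes> inv d') \<otimes> hd"
  have eA: "e \<in> A" unfolding e_def using cjA[of "inv c' \<otimes> inv d'" hd] c'A d'A Dd(2) by simp
  have ec: "e \<in> carrier G" using eA by simp
  have re: "rel (inv c' \<otimes> inv d') e" unfolding e_def using rel_conj[of "inv c' \<otimes> inv d'" hd] c'A d'A Dd(2) by simp
  define G1 where "G1 = hc \<otimes> (N \<otimes> hd \<otimes> inv N) \<otimes> (N \<otimes> N)"
  have G1H: "G1 \<in> HH" unfolding G1_def using HH_m HH_conj[OF sN Dd(2)] sw_sw[OF sN sN] Dc(2) by blast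
  have G1c: "G1 \<in> carrier G" using G1H HH_car by simp
  have hde: "inv c' \<otimes> inv d' \<otimes> hd = hd \<otimes> e" unfolding e_def using c'c d'c hdc by (simp add: m_assoc)
  have E0: "N = c \<otimes> d \<otimes> inv c' \<otimes> hc \<otimes> N \<otimes> hd \<otimes> e \<otimes> N \<otimes> inv d' \<otimes> c \<otimes> d"
  proof -
    have "(c \<otimes> d) \<otimes> (inv N \<otimes> (c \<otimes> d) \<otimes> N) \<otimes> (c \<otimes> d) = (c \<otimes> d) \<otimes> (inv (c \<otimes> d) \<otimes> N \<otimes> inv (c \<otimes> d)) \<otimes> (c \<otimes> d)"
      by (simp only: R)
    also have "\<dots> = N" using cc dc Nc by (simp add: m_assoc)
    finally have "N = (c \<otimes> d) \<otimes> ((inv N \<otimes> c \<otimes> N) \<otimes> (inv N \<otimes> d \<otimes> N)) \<otimes> (c \<otimes> d)"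
      using cc dc Nc by (simp add: m_assoc)
    also have "\<dots> = (c \<otimes> d) \<otimes> ((inv c' \<otimes> hc \<otimes> N \<otimes> inv c') \<otimes> (inv d' \<otimes> hd \<otimes> N \<otimes> inv d')) \<otimes> (c \<otimes> d)"
      by (simp only: Dc(3) Dd(3))
    also have "\<dots> = c \<otimes> d \<otimes> inv c' \<otimes> hc \<otimes> N \<otimes> (inv c' \<otimes> inv d' \<otimes> hd) \<otimes> N \<otimes> inv d' \<otimes> c \<otimes> d"
      using cc dc Nc c'c d'c hcc hdc by (simp add: m_assoc)
    also have "\<dots> = c \<otimes> d \<otimes> inv c' \<otimes> hc \<otimes> N \<otimes> (hd \<otimes> e) \<otimes> N \<otimes> inv d' \<otimes> c \<otimes> d"
      by (simp only: hde)
    also have "\<dots> = c \<otimes> d \<otimes> inv c' \<otimes> hc \<otimes> N \<otimes> hd \<otimes> e \<otimes> N \<otimes> inv d' \<otimes> c \<otimes> d"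
      using cc dc Nc c'c d'c hcc hdc ec by (simp add: m_assoc)
    finally show ?thesis .
  qed
  show ?thesis
  proof (cases "e = \<one>")
    case True
    have "N = (c \<otimes> d \<otimes> inv c') \<otimes> G1 \<otimes> (inv d' \<otimes> c \<otimes> d)"
      using E0 True cc dc Nc c'c d'c hcc hdc by (simp add: G1_def m_assoc)
    moreover
    have x1: "conj_set G A (c \<otimes> d \<otimes> inv c') = A" using cs_sub[OF A_sg] c d c'A by simp
    have x2: "conj_set G A (c \<otimes> d \<otimes> inv c' \<otimes> G1) = A"
      using cs_step[OF Ac _ G1c x1] cc dc c'c G1H unfolding HH_iff by simp
    have x3: "conj_set G A (c \<otimes> d \<otimes> inv c' \<otimes> G1 \<otimes> (inv d' \<otimes> c \<otimes> d)) = A"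
      using cs_step[OF Ac _ _ x2, of "inv d' \<otimes> c \<otimes> d"] cs_sub[OF A_sg, of "inv d' \<otimes> c \<otimes> d"] cc dc c'c d'A c d G1c by simp
    ultimately have "conj_set G A N = A" by simp
    moreover have "conj_set G A N = B" using sN unfolding sw_def by simp
    ultimately show ?thesis using AB by simp
  next
    case False
    obtain e' he where De: "rel e e'" "he \<in> HH" "inv N \<otimes> e \<otimes> N = inv e' \<otimes> he \<otimes> N \<otimes> inv e'"
      using Dlem[OF sN eA False] by blast
    have e'A: "e' \<in> A" using De(1) unfolding rel_def by auto
    have e'c: "e' \<in> carrier G" and hec: "he \<in> carrier G" using e'A De(2) HH_car by auto
    define f where "f = G1 \<otimes> inv e' \<otimes> inv G1"
    have rf: "rel (inv e') f" unfolding f_def using rel_conj[of "inv e'" "inv G1"] e'A HH_inv[OF G1H] G1c by simp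
    have fA: "f \<in> A" using rf unfolding rel_def by auto
    have fc: "f \<in> carrier G" using fA by simp
    define a1 where "a1 = c \<otimes> d \<otimes> inv c' \<otimes> f"
    define a2 where "a2 = inv e' \<otimes> inv d' \<otimes> c \<otimes> d"
    define GG where "GG = G1 \<otimes> he"
    have a1A: "a1 \<in> A" unfolding a1_def using c d c'A fA by simp
    have a2A: "a2 \<in> A" unfolding a2_def using c d d'A e'A by simp
    have GGH: "GG \<in> HH" unfolding GG_def using HH_m G1H De(2) by blast
    have a1c: "a1 \<in> carrier G" and a2c: "a2 \<in> carrier G" and GGc: "GG \<in> carrier G"
      using a1A a2A GGH HH_car by auto
    have eN: "e \<otimes> N = N \<otimes> inv e' \<otimes> he \<otimes> N \<otimes> inv e'"
    proof -
      have "e \<otimes> N = N \<otimes> (inv N \<otimes> e \<otimes> N)" using ec Nc by (simp add: m_assoc)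
      also have "\<dots> = N \<otimes> (inv e' \<otimes> he \<otimes> N \<otimes> inv e')" by (simp only: De(3))
      also have "\<dots> = N \<otimes> inv e' \<otimes> he \<otimes> N \<otimes> inv e'" using Nc e'c hec by (simp add: m_assoc)
      finally show ?thesis .
    qed
    have E1: "a1 \<otimes> GG \<otimes> N \<otimes> a2 = N"
    proof -
      have "N = c \<otimes> d \<otimes> inv c' \<otimes> hc \<otimes> N \<otimes> hd \<otimes> (e \<otimes> N) \<otimes> inv d' \<otimes> c \<otimes> d"
        using E0 cc dc Nc c'c d'c hcc hdc ec by (simp add: m_assoc)
      also have "\<dots> = c \<otimes> d \<otimes> inv c' \<otimes> hc \<otimes> N \<otimes> hd \<otimes> (N \<otimes> inv e' \<otimes> he \<otimes> N \<otimes> inv e') \<otimes> inv d' \<otimes> c \<otimes> d"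
        by (simp only: eN)
      also have "\<dots> = c \<otimes> d \<otimes> inv c' \<otimes> G1 \<otimes> inv e' \<otimes> he \<otimes> N \<otimes> a2"
        unfolding G1_def a2_def using cc dc Nc c'c d'c hcc hdc e'c hec by (simp add: m_assoc)
      also have "\<dots> = a1 \<otimes> GG \<otimes> N \<otimes> a2"
        unfolding a1_def GG_def f_def using cc dc Nc c'c d'c G1c e'c hec a2c by (simp add: m_assoc)
      finally show ?thesis by simp
    qed
    define Z where "Z = N \<otimes> a2 \<otimes> inv N"
    define Y where "Y = GG \<otimes> Z"
    have Zc: "Z \<in> carrier G" and Yc: "Y \<in> carrier G" using Z_def Y_def Nc a2c GGc by auto
    have "a1 \<otimes> Y = \<one>"
    proof -
      have "a1 \<otimes> Y = a1 \<otimes> GG \<otimes> N \<otimes> a2 \<otimes> inv N" unfolding Y_def Z_def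
        using a1c GGc Nc a2c by (simp add: m_assoc)
      also have "\<dots> = N \<otimes> inv N" by (simp only: E1)
      finally show ?thesis using Nc by simp
    qed
    hence "inv Y = a1" using inv_equality[of a1 Y] a1c Yc by simp
    hence Ya: "Y = inv a1" using Yc inv_inv by metis
    have "conj_set G B Y = B"
    proof -
      have y0: "Y = GG \<otimes> N \<otimes> a2 \<otimes> inv N" unfolding Y_def Z_def using GGc Nc a2c by (simp add: m_assoc)
      have y1: "conj_set G B GG = B" using GGH unfolding HH_iff by simp
      have y2: "conj_set G B (GG \<otimes> N) = A" using cs_step[OF Bc GGc Nc y1] sN unfolding sw_def by simp
      have y3: "conj_set G B (GG \<otimes> N \<otimes> a2) = A" using cs_step[OF Bc _ a2c y2] cs_sub[OF A_sg a2A] GGc Nc by simp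
      have y4: "conj_set G B (GG \<otimes> N \<otimes> a2 \<otimes> inv N) = B"
        using cs_step[OF Bc _ _ y3, of "inv N"] sw_inv[OF sN] GGc Nc a2c unfolding sw_def by simp
      show ?thesis using y0 y4 by simp
    qed
    hence "Y = \<one>" using F1b[of Y] Ya a1A by simp
    hence a1_1: "a1 = \<one>" using Ya a1c by (metis inv_inv inv_one)
    have "inv Z = GG" using inv_equality[of GG Z] \<open>Y = \<one>\<close> Y_def Zc GGc by simp
    hence "Z = inv GG" using Zc inv_inv by metis
    hence "conj_set G A Z = A" using HH_inv[OF GGH] unfolding HH_iff by simp
    moreover have "Z \<in> B" unfolding Z_def using cjB[OF a2A sw_inv[OF sN]] Nc by simp
    ultimately have "Z = \<one>" using F1a by simp
    hence a2_1: "a2 = \<one>"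
    proof -
      have "a2 = inv N \<otimes> Z \<otimes> N" unfolding Z_def using Nc a2c by (simp add: m_assoc)
      thus ?thesis using \<open>Z = \<one>\<close> Nc by simp
    qed
    have rc: "rel c c'" and rd: "rel d d'" using Dc(1) Dd(1) .
    have r1: "rel (d \<otimes> c) (d' \<otimes> c')" using rel_mult[OF rd rc] .
    have r2: "rel (d' \<otimes> c') (inv e)" using rel_inv[OF re] c'c d'c by (simp add: inv_mult_group)
    have r4: "rel (d \<otimes> c) (inv e')" using rel_trans[OF rel_trans[OF r1 r2] rel_inv[OF De(1)]] .
    have r5: "rel (d \<otimes> c) f" using rel_trans[OF r4 rf] .
    have r6: "rel (c \<otimes> d \<otimes> inv c \<otimes> (d \<otimes> c)) a1"
      unfolding a1_def using rel_mult[OF rel_mult[OF rel_refl[OF cdA] rel_inv[OF rc]] r5] .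
    have "c \<otimes> d \<otimes> inv c \<otimes> (d \<otimes> c) = c \<otimes> d \<otimes> d"
      using A_comm[OF d(1) c(1)] cc dc by (simp add: m_assoc)
    hence "rel (c \<otimes> d \<otimes> d) \<one>" using r6 a1_1 by simp
    hence k1: "c \<otimes> d \<otimes> d \<in> KK" unfolding rel_def using KK_i[of "inv (c \<otimes> d \<otimes> d)"] cc dc by simp
    have r7: "rel (d \<otimes> c \<otimes> inv d \<otimes> c \<otimes> d) a2"
      unfolding a2_def using rel_mult[OF rel_mult[OF rel_mult[OF r4 rel_inv[OF rd]] rel_refl[OF c(1)]] rel_refl[OF d(1)]] .
    have "d \<otimes> c \<otimes> inv d \<otimes> c \<otimes> d = c \<otimes> c \<otimes> d"
      using A_comm[OF d(1) c(1)] cc dc by (simp add: m_assoc)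
    hence "rel (c \<otimes> c \<otimes> d) \<one>" using r7 a2_1 by simp
    hence k2: "c \<otimes> c \<otimes> d \<in> KK" unfolding rel_def using KK_i[of "inv (c \<otimes> c \<otimes> d)"] cc dc by simp
    show ?thesis using k1 k2 by simp
  qed
qed

lemma Lt: assumes "t \<in> A" "w \<in> A" "w \<noteq> \<one>" "t \<otimes> w \<noteq> \<one>" "t \<otimes> w \<otimes> w \<noteq> \<one>"
  shows "t \<in> KK"
proof -
  have tc: "t \<in> carrier G" and wc: "w \<in> carrier G" using assms by auto
  have m: "t \<otimes> w \<otimes> w \<otimes> w \<in> KK \<and> t \<otimes> w \<otimes> (t \<otimes> w) \<otimes> w \<in> KK"
    using main[of "t \<otimes> w" w] assms by simp
  hence k: "inv (t \<otimes> w \<otimes> w \<otimes> w) \<otimes> (t \<otimes> w \<otimes> (t \<otimes> w) \<otimes> w) \<in> KK" using KK_i KK_m by blast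
  have cm: "t \<otimes> (w \<otimes> w) = w \<otimes> (w \<otimes> t)"
    using A_comm[of t w] A_comm[of t "w \<otimes> w"] assms tc wc by (simp add: m_assoc)
  have "t \<otimes> w \<otimes> (t \<otimes> w) \<otimes> w = t \<otimes> (w \<otimes> (t \<otimes> (w \<otimes> w)))"
    using tc wc by (simp add: m_assoc)
  also have "\<dots> = t \<otimes> (w \<otimes> (w \<otimes> (w \<otimes> t)))" by (simp only: cm)
  also have "\<dots> = (t \<otimes> w \<otimes> w \<otimes> w) \<otimes> t" using tc wc by (simp add: m_assoc)
  finally have eq: "t \<otimes> w \<otimes> (t \<otimes> w) \<otimes> w = (t \<otimes> w \<otimes> w \<otimes> w) \<otimes> t" .
  have "inv (t \<otimes> w \<otimes> w \<otimes> w) \<otimes> ((t \<otimes> w \<otimes> w \<otimes> w) \<otimes> t) = t" using tc wc by simp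
  thus ?thesis using eq k by simp
qed

lemma allK: assumes x: "x \<in> A" and big: "infinite A \<or> card A \<ge> 4" shows "x \<in> KK"
proof (cases "x = \<one>")
  case True thus ?thesis using KK_1 by simp
next
  case False
  have xc: "x \<in> carrier G" using x by simp
  have "A - {\<one>, x, inv x} \<noteq> {}"
  proof
    assume "A - {\<one>, x, inv x} = {}"
    hence sub: "A \<subseteq> {\<one>, x, inv x}" by blast
    hence "finite A" using finite_subset by blast
    hence "card A \<ge> 4" using big by simp
    moreover have "card A \<le> card {\<one>, x, inv x}" using card_mono[OF _ sub] by simp
    moreover have "card {\<one>, x, inv x} \<le> 3" by (simp add: card_insert_if)
    ultimately show False by simp
  qed
  then obtain w where w: "w \<in> A" "w \<noteq> \<one>" "w \<noteq> x" "w \<noteq> inv x" by blast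
  have wc: "w \<in> carrier G" using w by simp
  have xw: "x \<otimes> w \<noteq> \<one>"
  proof
    assume "x \<otimes> w = \<one>" hence "inv w = x" using inv_equality[of x w] xc wc by simp
    thus False using w(4) wc by (metis inv_inv)
  qed
  have ixw: "inv x \<otimes> w \<noteq> \<one>"
  proof
    assume "inv x \<otimes> w = \<one>" hence "inv w = inv x" using inv_equality[of "inv x" w] xc wc by simp
    thus False using w(3) wc xc by (metis inv_inv)
  qed
  show ?thesis
  proof (cases "x \<otimes> w \<otimes> w = \<one>")
    case False thus ?thesis using Lt[OF x w(1,2) xw] by simp
  next
    case T1: True
    show ?thesis
    proof (cases "inv x \<otimes> w \<otimes> w = \<one>")
      case False
      hence "inv x \<in> KK" using Lt[of "inv x" w] x w ixw by simp
      thus ?thesis using KK_i[of "inv x"] xc by simp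
    next
      case True
      have "inv (w \<otimes> w) = x" using inv_equality[of x "w \<otimes> w"] T1 xc wc by (simp add: m_assoc)
      hence ww: "w \<otimes> w = inv x" using wc by (metis inv_inv m_closed)
      have "inv (w \<otimes> w) = inv x" using inv_equality[of "inv x" "w \<otimes> w"] True xc wc by (simp add: m_assoc)
      hence ww2: "w \<otimes> w = x" using wc xc by (metis inv_inv m_closed)
      have "w \<otimes> w \<otimes> w \<noteq> \<one>"
      proof
        assume "w \<otimes> w \<otimes> w = \<one>" hence "x \<otimes> w = \<one>" using ww2 by simp
        thus False using xw by simp
      qed
      hence "w \<in> KK" using Lt[OF w(1) w(1) w(2)] ww2 False by simp
      thus ?thesis using KK_m[of w w] ww2 by simp
    qed
  qed
qed

end

theorem theorem1p1:
  fixes X :: "('a, 'b) monoid_scheme" and A B H :: "'a set"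
  assumes "special_rank_one_group X A B"
    and "H = normalizer X A \<inter> normalizer X B"
    and "infinite A \<or> card A \<ge> 4"
  shows "A = comm_subgroup X A H"
proof -
  have r: "rank_one_group X A B" and sp: "\<forall>a\<in>A - {\<one>\<^bsub>X\<^esub>}. b_of X A B (inv\<^bsub>X\<^esub> a) = inv\<^bsub>X\<^esub> (b_of X A B a)"
    using assms(1) unfolding special_rank_one_group_def by auto
  note r' = r[unfolded rank_one_group_def abelian_subgroup_def]
  interpret S: sr1 X A B
    apply (rule sr1.intro)
    using r' apply blast
    apply (rule sr1_axioms.intro)
    subgoal using r' by blast
    subgoal using r' by blast
    subgoal using r' by blast
    subgoal using r' by blast
    subgoal using r' by blast
    subgoal using r' by blast
    subgoal using sp by blast
    done
  have "H = S.HH" using assms(2) S.HH_def by simp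
  hence "comm_subgroup X A H = S.KK" using S.KK_def by simp
  thus ?thesis using S.KK_A S.allK assms(3) by blast
qed

end
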